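(* Let $\mu$ be a probability measure supported on a symmetric convex domain $\Omega\subset\mathbb R^n$ and let $p>0$. For every nonnegative function $f$ on $\Omega$ with $f^p\in\mathrm{QC}(\Omega,\mu)$, $$\int_0^\infty t^{p-1}\mu^*(\{x\in\Omega: f(x)<t\})\,dt\le\int_\Omega f^{p-1}\Phi_f\,d\mu.$$ Moreover, for every positive function $f$ on $\Omega$ with $f^p\in\mathrm{QC}(\Omega,\mu)$, $$\int_0^\infty t^{p-1}\mu^*\Big(\Big\{x\in\Omega:\frac1{f(x)}>t\Big\}\Big)\,dt\le\int_\Omega f^{-p-1}\Phi_f\,d\mu.$$
   Context: Symmetric convex domain: nonempty open convex $\Omega=-\Omega\subset\mathbb R^n$. Symmetric function: $f(x)=f(-x)$; quasi-convex: $\{f<\lambda\}$ convex for all $\lambda$. For Borel $A\subset\mathbb R^n$, $\varepsilon\in(0,1)$: $A_\varepsilon:=A\cup\{x\in\mathbb R^n:\exists y,\ \int_0^1\mathbf 1_A((1-t)x+ty)\,dt>1-\varepsilon\}$; $\mu^*(A):=\liminf_{\varepsilon\downarrow0}(\mu(A_\varepsilon)-\mu(A))/\varepsilon$. For nonnegative symmetric quasi-convex $f$, $\Phi_f(x):=\limsup_{\varepsilon\downarrow0}\frac{f(x)-f(\frac{1-\varepsilon}{1+\varepsilon}x)}{\varepsilon}$. $\mathrm{QC}(\Omega,\mu)$ is the set of all nonnegative, continuous, symmetric quasi-convex $f$ on $\Omega$ for which there exist a nonnegative Borel $g\in L^1(\mu)$ and $\varepsilon_0\in(0,1]$ with $\sup_{\varepsilon\in(0,\varepsilon_0)}\frac{f(x)-f(\frac{1-\varepsilon}{1+\varepsilon}x)}{\varepsilon}\le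 g(x)$ for all $x\in\Omega$. *)

theory Defs
  imports "HOL-Probability.Probability"
begin

definition sym_convex_domain :: "'a::euclidean_space set \<Rightarrow> bool" where
  "sym_convex_domain \<Omega> \<longleftrightarrow> \<Omega> \<noteq> {} \<and> open \<Omega> \<and> convex \<Omega> \<and> uminus ` \<Omega> = \<Omega>"

definition eps_ext :: "'a::euclidean_space set \<Rightarrow> real \<Rightarrow> 'a set" where
  "eps_ext A \<epsilon> = A \<union> {x. \<exists>y. (LINT t:{0..1}|lborel. indicator A ((1 - t) *\<^sub>R x + t *\<^sub>R y)) > 1 - \<epsilon>}"

text \<open>The boundary measure mu^*(A) = liminf_{eps -> 0+} (mu(A_eps) - mu(A)) / eps.
  Since A_eps need not be Borel, mu(A_eps) is read as the outer measure.\<close>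
definition mu_star :: "'a::euclidean_space measure \<Rightarrow> 'a set \<Rightarrow> ereal" where
  "mu_star \<mu> A = Liminf (at_right 0)
     (\<lambda>\<epsilon>. ereal ((enn2real (outer_measure_of \<mu> (eps_ext A \<epsilon>)) - measure \<mu> A) / \<epsilon>))"

definition Phi :: "('a::euclidean_space \<Rightarrow> real) \<Rightarrow> 'a \<Rightarrow> ereal" where
  "Phi f x = Limsup (at_right 0)
     (\<lambda>\<epsilon>. ereal ((f x - f (((1 - \<epsilon>) / (1 + \<epsilon>)) *\<^sub>R x)) / \<epsilon>))"

definition QC :: "'a::euclidean_space set \<Rightarrow> 'a measure \<Rightarrow> ('a \<Rightarrow> real) \<Rightarrow> bool" where
  "QC \<Omega> \<mu> h \<longleftrightarrow>
     (\<forall>x\<in>\<Omega>. 0 \<le> h x) \<and> continuous_on \<Omega> h \<and> (\<forall>x\<in>\<Omega>. h (- x) = h x) \<and>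
     (\<forall>c. convex {x\<in>\<Omega>. h x < c}) \<and>
     (\<exists>g \<epsilon>0. g \<in> borel_measurable borel \<and> (\<forall>x. 0 \<le> g x) \<and> integrable \<mu> g \<and>
        0 < \<epsilon>0 \<and> \<epsilon>0 \<le> 1 \<and>
        (\<forall>x\<in>\<Omega>. \<forall>\<epsilon>\<in>{0<..<\<epsilon>0}. (h x - h (((1 - \<epsilon>) / (1 + \<epsilon>)) *\<^sub>R x)) / \<epsilon> \<le> g x))"

end

theory Submission
  imports Defs
begin



lemma convex_two_0:
  fixes A :: "'a::real_vector set"
  assumes "convex A" "0 \<in> A" "P \<in> A" "Q \<in> A" "0 \<le> \<alpha>" "0 \<le> \<beta>" "\<alpha> + \<beta> \<le> 1"
  shows "\<alpha> *\<^sub>R P + \<beta> *\<^sub>R Q \<in> A"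
proof (cases "\<alpha> + \<beta> = 0")
  case True
  then have "\<alpha> = 0" "\<beta> = 0" using assms by auto
  then show ?thesis using assms by simp
next
  case False
  then have pos: "\<alpha> + \<beta> > 0" using assms by auto
  define z where "z = (\<alpha>/(\<alpha>+\<beta>)) *\<^sub>R P + (\<beta>/(\<alpha>+\<beta>)) *\<^sub>R Q"
  have z: "z \<in> A" unfolding z_def
    by (rule convexD[OF assms(1,3,4)]) (use assms pos in \<open>auto simp: divide_simps\<close>)
  have "(1 - (\<alpha>+\<beta>)) *\<^sub>R 0 + (\<alpha>+\<beta>) *\<^sub>R z \<in> A"
    by (rule convexD[OF assms(1,2) z]) (use assms in auto)
  moreover have "(\<alpha>+\<beta>) *\<^sub>R z = \<alpha> *\<^sub>R P + \<beta> *\<^sub>R Q"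
    using pos by (simp add: z_def scaleR_add_right)
  ultimately show ?thesis by simp
qed

lemma sym_convex_0:
  fixes A :: "'a::real_vector set"
  assumes "convex A" "\<And>x. x \<in> A \<Longrightarrow> - x \<in> A" "x \<in> A"
  shows "0 \<in> A"
proof -
  have "(1/2) *\<^sub>R x + (1/2) *\<^sub>R (-x) \<in> A"
    by (rule convexD[OF assms(1,3) assms(2)[OF assms(3)]]) auto
  then show ?thesis by simp
qed

lemma eps_ext_scale:
  fixes A :: "'a::euclidean_space set"
  assumes cA: "convex A" and sA: "\<And>x. x \<in> A \<Longrightarrow> - x \<in> A" and oA: "open A"
    and e: "0 < \<epsilon>" "\<epsilon> < 1" and x: "x \<in> eps_ext A \<epsilon>"
  shows "((1 - \<epsilon>) / (1 + \<epsilon>)) *\<^sub>R x \<in> A"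
proof -
  define c where "c = (1 - \<epsilon>) / (1 + \<epsilon>)"
  have c: "0 < c" "c \<le> 1" using e by (auto simp: c_def divide_simps)
  show ?thesis
  proof (cases "x \<in> A")
    case True
    have "0 \<in> A" using sym_convex_0[OF cA sA True] .
    have "c *\<^sub>R x + 0 *\<^sub>R 0 \<in> A"
      by (rule convex_two_0[OF cA \<open>0\<in>A\<close> True \<open>0\<in>A\<close>]) (use c in auto)
    then show ?thesis by (simp add: c_def)
  next
    case False
    then obtain y where y: "(LINT t:{0..1}|lborel. indicator A ((1 - t) *\<^sub>R x + t *\<^sub>R y)) > 1 - \<epsilon>"
      using x by (auto simp: eps_ext_def)
    define L where "L = (\<lambda>t::real. (1 - t) *\<^sub>R x + t *\<^sub>R y)"
    define T where "T = {0..1} \<inter> L -` A"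
    have contL: "continuous_on UNIV L" unfolding L_def by (intro continuous_intros)
    have "open (L -` A)" using open_vimage[OF oA contL] .
    then have Tm: "T \<in> sets lborel" unfolding T_def by auto
    have Tsub: "T \<subseteq> {0..1}" unfolding T_def by auto
    have Tfin: "emeasure lborel T \<noteq> \<infinity>"
    proof -
      have "emeasure lborel T \<le> emeasure lborel {0..1::real}" by (rule emeasure_mono[OF Tsub]) simp
      then show ?thesis by (auto simp: top_unique)
    qed
    have "(LINT t:{0..1}|lborel. indicator A ((1 - t) *\<^sub>R x + t *\<^sub>R y)) = integral\<^sup>L lborel (indicator T)"
      unfolding set_lebesgue_integral_def T_def L_def
      by (intro Bochner_Integration.integral_cong) (auto simp: indicator_def)
    also have "\<dots> = measure lborel T" using Tm Tfin by simp
    finally have mT: "measure lborel T > 1 - \<epsilon>" using y by simp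
    have Tne: "T \<noteq> {}" using mT e by auto
    have bb: "bdd_below T" "bdd_above T" using Tsub by (meson bdd_below_Icc bdd_below_mono, meson bdd_above_Icc bdd_above_mono)
    have "T \<subseteq> {Inf T .. Sup T}" using bb by (auto intro: cInf_lower cSup_upper)
    then have "measure lborel T \<le> measure lborel {Inf T .. Sup T}"
      using Tm cInf_le_cSup[OF Tne bb(2) bb(1)] by (intro measure_mono_fmeasurable) (auto simp: fmeasurable_def)
    also have "\<dots> = Sup T - Inf T" using Tne bb
      by (simp add: cInf_le_cSup)
    finally have mle: "measure lborel T \<le> Sup T - Inf T" .
    define \<delta> where "\<delta> = (measure lborel T - (1 - \<epsilon>)) / 2"
    have \<delta>: "\<delta> > 0" using mT by (simp add: \<delta>_def)
    obtain a where a: "a \<in> T" "a < Inf T + \<delta>"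
      using cInf_less_iff[OF Tne bb(1), of "Inf T + \<delta>"] \<delta> by auto
    obtain b where b: "b \<in> T" "b > Sup T - \<delta>"
      using less_cSup_iff[OF Tne bb(2), of "Sup T - \<delta>"] \<delta> by auto
    have d: "b - a > 1 - \<epsilon>" using a(2) b(2) mle unfolding \<delta>_def by (simp add: field_simps)
    have a01: "0 \<le> a" and b1: "b \<le> 1" using a b Tsub by auto
    define s where "s = a / (b - a)"
    have bapos: "b - a > 0" using d e by simp
    have s0: "0 \<le> s" using a01 bapos by (simp add: s_def)
    have "a < \<epsilon>" using d b1 by simp
    have sle: "s \<le> \<epsilon> / (1 - \<epsilon>)"
    proof -
      have "a * (1 - \<epsilon>) \<le> \<epsilon> * (b - a)" using d \<open>a < \<epsilon>\<close> a01 e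
        by (smt (verit, best) mult_left_mono mult_right_mono)
      then show ?thesis using bapos e by (simp add: s_def divide_simps)
    qed
    have PA: "L a \<in> A" and QA: "L b \<in> A" using a b by (auto simp: T_def)
    have xeq: "x = (1 + s) *\<^sub>R L a - s *\<^sub>R L b"
    proof -
      have "(1 + s) *\<^sub>R L a - s *\<^sub>R L b = L a + s *\<^sub>R (L a - L b)" by (simp add: algebra_simps)
      also have "L a - L b = (b - a) *\<^sub>R (x - y)" by (simp add: L_def algebra_simps)
      also have "s *\<^sub>R ((b - a) *\<^sub>R (x - y)) = a *\<^sub>R (x - y)" using bapos by (simp add: s_def)
      also have "L a + a *\<^sub>R (x - y) = x" by (simp add: L_def algebra_simps)
      finally show ?thesis by simp
    qed
    have "0 \<in> A" using sym_convex_0[OF cA sA PA] .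
    have sum1: "c * (1 + s) + c * s \<le> 1"
    proof -
      have "c * (1 + 2 * s) \<le> c * (1 + 2 * (\<epsilon> / (1 - \<epsilon>)))"
        using sle c by (intro mult_left_mono) auto
      also have "\<dots> = 1" using e mult_strict_mono[of \<epsilon> 1 \<epsilon> 1] by (simp add: c_def field_simps)
      finally show ?thesis by (simp add: algebra_simps)
    qed
    have "(c * (1 + s)) *\<^sub>R L a + (c * s) *\<^sub>R (- L b) \<in> A"
      by (rule convex_two_0[OF cA \<open>0\<in>A\<close> PA sA[OF QA]]) (use c s0 sum1 in auto)
    moreover have "(c * (1 + s)) *\<^sub>R L a + (c * s) *\<^sub>R (- L b) = c *\<^sub>R x"
      by (subst xeq) (simp add: algebra_simps)
    ultimately show ?thesis by (simp add: c_def)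
  qed
qed




locale setting =
  fixes \<Omega> :: "'a::euclidean_space set" and \<mu> :: "'a measure" and p :: real and f :: "'a \<Rightarrow> real"
  assumes dom: "sym_convex_domain \<Omega>" and P: "prob_space \<mu>" and S: "sets \<mu> = sets borel"
    and E: "emeasure \<mu> \<Omega> = 1" and p: "p > 0" and nn: "\<forall>x\<in>\<Omega>. 0 \<le> f x"
    and qc: "QC \<Omega> \<mu> (\<lambda>x. f x powr p)"
begin

definition h where "h x = f x powr p"
definition A where "A s = {x\<in>\<Omega>. f x < s}"

lemma Om: "open \<Omega>" "convex \<Omega>" "\<Omega> \<noteq> {}" using dom by (auto simp: sym_convex_domain_def)

lemma neg: "x \<in> \<Omega> \<Longrightarrow> - x \<in> \<Omega>"
  using dom unfolding sym_convex_domain_def by (metis imageI minus_minus)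

lemma zero: "0 \<in> \<Omega>"
  using Om(3) sym_convex_0[OF Om(2) neg] by blast

lemma hcont: "continuous_on \<Omega> h" using qc by (simp add: QC_def h_def[abs_def])
lemma hsym: "x \<in> \<Omega> \<Longrightarrow> h (- x) = h x" using qc by (simp add: QC_def h_def)
lemma hqc: "convex {x\<in>\<Omega>. h x < c}" using qc by (simp add: QC_def h_def[abs_def])
lemma hnn: "0 \<le> h x" by (simp add: h_def)

lemma f_eq: "x \<in> \<Omega> \<Longrightarrow> f x = h x powr (1/p)"
  using nn p by (simp add: h_def powr_powr powr_one)

lemma fcont: "continuous_on \<Omega> f"
proof -
  have "continuous_on \<Omega> (\<lambda>x. h x powr (1/p))"
    using p by (intro continuous_on_powr' hcont continuous_on_const) (auto simp: hnn)
  then show ?thesis by (rule continuous_on_eq) (metis f_eq)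
qed

lemma h_scale: assumes x: "x \<in> \<Omega>" and c: "0 \<le> c" "c \<le> 1"
  shows "c *\<^sub>R x \<in> \<Omega>" "h (c *\<^sub>R x) \<le> h x"
proof -
  have cx: "c *\<^sub>R x = ((1 + c)/2) *\<^sub>R x + ((1 - c)/2) *\<^sub>R (- x)"
  proof -
    have "((1 + c)/2) *\<^sub>R x + ((1 - c)/2) *\<^sub>R (- x) = ((1 + c)/2 - (1 - c)/2) *\<^sub>R x"
      by (simp add: scaleR_diff_left)
    also have "(1 + c)/2 - (1 - c)/2 = c" by (simp add: field_simps)
    finally show ?thesis by simp
  qed
  show "c *\<^sub>R x \<in> \<Omega>" unfolding cx by (rule convexD[OF Om(2) x neg[OF x]]) (use c in \<open>auto simp: field_simps\<close>)
  show "h (c *\<^sub>R x) \<le> h x"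
  proof (rule field_le_epsilon)
    fix e :: real assume e: "0 < e"
    have "c *\<^sub>R x \<in> {y\<in>\<Omega>. h y < h x + e}" unfolding cx
      by (rule convexD[OF hqc]) (use c x neg[OF x] hsym[OF x] e in \<open>auto simp: field_simps\<close>)
    then show "h (c *\<^sub>R x) \<le> h x + e" by simp
  qed
qed

lemma f_scale: assumes x: "x \<in> \<Omega>" and c: "0 \<le> c" "c \<le> 1"
  shows "f (c *\<^sub>R x) \<le> f x"
proof -
  have "h (c *\<^sub>R x) powr (1/p) \<le> h x powr (1/p)"
    using h_scale[OF assms] p by (intro powr_mono2) (auto simp: hnn)
  then show ?thesis using f_eq[OF h_scale(1)[OF assms]] f_eq[OF x] by metis
qed

lemma f_less_iff: "x \<in> \<Omega> \<Longrightarrow> 0 < s \<Longrightarrow> f x < s \<longleftrightarrow> h x < s powr p"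
proof -
  assume x: "x \<in> \<Omega>" and s: "0 < s"
  show ?thesis
  proof
    assume "f x < s" then show "h x < s powr p" using nn x p powr_less_mono2[of p "f x" s] by (simp add: h_def)
  next
    assume a: "h x < s powr p"
    show "f x < s"
    proof (rule ccontr)
      assume "\<not> f x < s"
      then have "s powr p \<le> f x powr p" using s p by (intro powr_mono2) auto
      then show False using a by (simp add: h_def)
    qed
  qed
qed

lemma A_open: "open (A s)"
proof -
  have "A s = \<Omega> \<inter> f -` {..<s}" by (auto simp: A_def)
  moreover have "\<forall>B. open B \<longrightarrow> open (f -` B \<inter> \<Omega>)" using continuous_on_open_vimage[OF Om(1), of f] fcont by simp
  then have "open (f -` {..<s} \<inter> \<Omega>)" by simp
  ultimately show ?thesis by (simp add: Int_commute)
qed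

lemma A_sym: "x \<in> A s \<Longrightarrow> - x \<in> A s"
proof -
  assume x: "x \<in> A s"
  then have xO: "x \<in> \<Omega>" by (simp add: A_def)
  have "f (-x) = h (-x) powr (1/p)" using f_eq[OF neg[OF xO]] .
  also have "\<dots> = h x powr (1/p)" using hsym[OF xO] by simp
  also have "\<dots> = f x" using f_eq[OF xO] by simp
  finally show "- x \<in> A s" using x neg[OF xO] by (simp add: A_def)
qed

lemma A_convex: "convex (A s)"
proof (cases "s > 0")
  case True
  then have "A s = {x\<in>\<Omega>. h x < s powr p}" using f_less_iff by (auto simp: A_def)
  then show ?thesis using hqc by simp
next
  case False
  then have "A s = {}" using nn by (force simp: A_def)
  then show ?thesis by simp
qed

lemma A_scale: "0 < \<epsilon> \<Longrightarrow> \<epsilon> < 1 \<Longrightarrow> x \<in> eps_ext (A s) \<epsilon> \<Longrightarrow> ((1 - \<epsilon>) / (1 + \<epsilon>)) *\<^sub>R x \<in> A s"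
proof -
  assume "0 < \<epsilon>" "\<epsilon> < 1" "x \<in> eps_ext (A s) \<epsilon>"
  moreover have "\<And>y. y \<in> A s \<Longrightarrow> - y \<in> A s" by (rule A_sym)
  ultimately show ?thesis using eps_ext_scale[of "A s" \<epsilon> x, OF A_convex] A_open by blast
qed

end



lemma Liminf_filter_mono: "F \<le> G \<Longrightarrow> Liminf G g \<le> Liminf F (g :: _ \<Rightarrow> 'b::complete_lattice)"
  unfolding Liminf_def by (rule SUP_subset_mono) (auto dest: filter_leD)

lemma Limsup_filter_mono: "F \<le> G \<Longrightarrow> Limsup F g \<le> Limsup G (g :: _ \<Rightarrow> 'b::complete_lattice)"
  unfolding Limsup_def by (rule INF_superset_mono) (auto dest: filter_leD)

lemma e2ennreal_mult_ereal:
  assumes "0 \<le> k" shows "e2ennreal (ereal k * x) = ennreal k * e2ennreal x"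
proof (cases x)
  case (real r)
  then show ?thesis
  proof (cases "r \<ge> 0")
    case True then show ?thesis using real assms by (simp add: ennreal_mult)
  next
    case False
    then have "k * r \<le> 0" using assms by (simp add: mult_nonneg_nonpos)
    then show ?thesis using real False by (simp add: ennreal_neg)
  qed
next
  case PInf
  then show ?thesis using assms by (cases "k = 0") (auto simp: ennreal_mult_top)
next
  case MInf
  then show ?thesis using assms by (cases "k = 0") (auto simp: e2ennreal_neg)
qed

lemma mono_e2ennreal: "mono e2ennreal" by (auto simp: mono_def e2ennreal_mono)

lemma liminf_ennreal_e2: "liminf (\<lambda>n. ennreal (r n)) = e2ennreal (liminf (\<lambda>n. ereal (r n)))"
  using Liminf_compose_continuous_mono[OF continuous_on_e2ennreal mono_e2ennreal, of sequentially "\<lambda>n. ereal (r n)"]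
  by simp

lemma limsup_ennreal_e2: "limsup (\<lambda>n. ennreal (r n)) = e2ennreal (limsup (\<lambda>n. ereal (r n)))"
  using Limsup_compose_continuous_mono[OF continuous_on_e2ennreal mono_e2ennreal, of sequentially "\<lambda>n. ereal (r n)"]
  by simp

lemma powr_mvt_bound:
  fixes a b r :: real
  assumes r: "r \<noteq> 0" and b: "0 < b" "b \<le> a"
  shows "(a powr r - b powr r) / r \<le> max (a powr (r-1)) (b powr (r-1)) * (a - b)"
proof (cases "b = a")
  case True then show ?thesis by simp
next
  case False
  then have ba: "b < a" using b by simp
  have "\<exists>z. b < z \<and> z < a \<and> a powr r - b powr r = (a - b) * (r * z powr (r - 1))"
    by (rule MVT2[OF ba]) (use b in \<open>auto intro!: has_real_derivative_powr\<close>)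
  then obtain z where z: "b < z" "z < a" "a powr r - b powr r = (a - b) * (r * z powr (r - 1))" by blast
  have "(a powr r - b powr r) / r = z powr (r-1) * (a - b)" using z(3) r by simp
  also have "z powr (r-1) \<le> max (a powr (r-1)) (b powr (r-1))"
  proof (cases "r - 1 \<ge> 0")
    case True
    then have "z powr (r-1) \<le> a powr (r-1)" using z b by (intro powr_mono2) auto
    then show ?thesis by simp
  next
    case False
    then have "z powr (r-1) \<le> b powr (r-1)" using z b by (intro powr_mono2') auto
    then show ?thesis by simp
  qed
  then have "z powr (r-1) * (a - b) \<le> max (a powr (r-1)) (b powr (r-1)) * (a - b)"
    using ba by (intro mult_right_mono) auto
  finally show ?thesis .
qed

lemma ptwise:
  fixes a r :: real and b e :: "nat \<Rightarrow> real" and L :: ereal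
  assumes r: "r \<noteq> 0" and a: "a > 0" and bl: "b \<longlonglongrightarrow> a" and ba: "\<And>n. b n \<le> a"
    and e: "\<And>n. e n > 0"
    and Lb: "limsup (\<lambda>n. ereal ((a - b n) / e n)) \<le> L"
  shows "limsup (\<lambda>n. ennreal ((a powr r - b n powr r) / (r * e n))) \<le> ennreal (a powr (r-1)) * e2ennreal L"
proof -
  define K where "K n = max (a powr (r-1)) (b n powr (r-1))" for n
  define k where "k = a powr (r-1)"
  have k: "k > 0" using a by (simp add: k_def)
  have "(\<lambda>n. b n powr (r-1)) \<longlonglongrightarrow> a powr (r-1)"
    by (rule tendsto_powr[OF bl tendsto_const]) (use a in simp)
  then have "K \<longlonglongrightarrow> max k k" unfolding K_def k_def by (intro tendsto_max tendsto_const)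
  then have Kl: "(\<lambda>n. ereal (K n)) \<longlonglongrightarrow> ereal k" by (simp add: tendsto_ereal)
  have evb: "eventually (\<lambda>n. b n > 0) sequentially" using bl a by (simp add: order_tendstoD(1))
  have ev: "eventually (\<lambda>n. ereal ((a powr r - b n powr r) / (r * e n)) \<le> ereal (K n) * ereal ((a - b n) / e n)) sequentially"
    using evb
  proof (rule eventually_mono)
    fix n assume bn: "b n > 0"
    have "(a powr r - b n powr r) / (r * e n) = ((a powr r - b n powr r) / r) / e n" by simp
    also have "\<dots> \<le> (K n * (a - b n)) / e n"
      using powr_mvt_bound[OF r bn ba] e[of n] unfolding K_def by (intro divide_right_mono) auto
    finally show "ereal ((a powr r - b n powr r) / (r * e n)) \<le> ereal (K n) * ereal ((a - b n) / e n)"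
      by simp
  qed
  have "limsup (\<lambda>n. ereal ((a powr r - b n powr r) / (r * e n))) \<le> limsup (\<lambda>n. ereal (K n) * ereal ((a - b n) / e n))"
    by (rule Limsup_mono[OF ev])
  also have "\<dots> = ereal k * limsup (\<lambda>n. ereal ((a - b n) / e n))"
    by (rule ereal_limsup_lim_mult[OF Kl]) (use k in auto)
  also have "\<dots> \<le> ereal k * L" using Lb k by (intro ereal_mult_left_mono) auto
  finally have "e2ennreal (limsup (\<lambda>n. ereal ((a powr r - b n powr r) / (r * e n)))) \<le> e2ennreal (ereal k * L)"
    by (rule e2ennreal_mono)
  then show ?thesis using k unfolding limsup_ennreal_e2 by (simp add: e2ennreal_mult_ereal k_def)
qed

lemma inner_integral:
  fixes p U V :: real and S :: "real set"
  assumes p: "p > 0" and U: "0 \<le> U" "U \<le> V"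
    and S1: "\<And>t. t > 0 \<Longrightarrow> U < t \<Longrightarrow> t < V \<Longrightarrow> t \<in> S"
    and S2: "\<And>t. t > 0 \<Longrightarrow> t \<in> S \<Longrightarrow> U \<le> t \<and> t \<le> V"
  shows "(\<integral>\<^sup>+t. indicator {0<..} t * ennreal (t powr (p-1)) * indicator S t \<partial>lborel) = ennreal ((V powr p - U powr p)/p)"
proof -
  have hi: "((\<lambda>t. t powr (p-1)) has_integral ((V powr p - U powr p)/p)) {U..V}"
  proof (cases "U = 0")
    case True
    then show ?thesis using has_integral_powr_from_0[of "p-1" V] p U by simp
  next
    case False
    then have U0: "U > 0" using U by simp
    have "((\<lambda>t. t powr (p-1)) has_integral ((\<lambda>t. t powr p / p) V - (\<lambda>t. t powr p / p) U)) {U..V}"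
    proof (rule fundamental_theorem_of_calculus[OF U(2)])
      fix t assume t: "t \<in> {U..V}"
      then have "t > 0" using U0 by simp
      have "((\<lambda>t. t powr p / p) has_real_derivative (p * t powr (p - 1)) / p) (at t)"
        by (intro DERIV_cdivide has_real_derivative_powr \<open>t > 0\<close>)
      then have "((\<lambda>t. t powr p / p) has_real_derivative t powr (p - 1)) (at t)" using p by simp
      then show "((\<lambda>t. t powr p / p) has_vector_derivative t powr (p - 1)) (at t within {U..V})"
        by (simp add: has_real_derivative_iff_has_vector_derivative has_vector_derivative_at_within)
    qed
    then show ?thesis by (simp add: diff_divide_distrib)
  qed
  have "(\<integral>\<^sup>+t. ennreal (t powr (p-1)) * indicator {U..V} t \<partial>lborel) = ennreal ((V powr p - U powr p)/p)"
    by (rule nn_integral_has_integral_lebesgue'[OF _ hi]) simp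
  moreover have "(\<integral>\<^sup>+t. indicator {0<..} t * ennreal (t powr (p-1)) * indicator S t \<partial>lborel) =
      (\<integral>\<^sup>+t. ennreal (t powr (p-1)) * indicator {U..V} t \<partial>lborel)"
  proof (rule nn_integral_cong_AE)
    have "AE t in lborel. t \<noteq> 0" "AE t in lborel. t \<noteq> U" "AE t in lborel. t \<noteq> V"
      by (rule AE_lborel_singleton)+
    then show "AE t in lborel. indicator {0<..} t * ennreal (t powr (p-1)) * indicator S t =
      ennreal (t powr (p-1)) * indicator {U..V} t"
    proof eventually_elim
      case (elim t)
      show ?case
      proof (cases "t > 0")
        case True
        then have "t \<in> S \<longleftrightarrow> t \<in> {U..V}" using S1 S2 elim by force
        then show ?thesis using True by (simp add: indicator_def)
      next
        case False
        then have "t \<notin> {U..V}" using U elim by auto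
        then show ?thesis using False by (simp add: indicator_def)
      qed
    qed
  qed
  ultimately show ?thesis by simp
qed




context setting begin

definition cc :: "real \<Rightarrow> real" where "cc \<epsilon> = (1 - \<epsilon>) / (1 + \<epsilon>)"
definition D where "D \<epsilon> s = {x\<in>\<Omega>. f (cc \<epsilon> *\<^sub>R x) < s \<and> s \<le> f x}"

lemma cc: "0 < \<epsilon> \<Longrightarrow> \<epsilon> < 1 \<Longrightarrow> 0 \<le> cc \<epsilon> \<and> cc \<epsilon> \<le> 1"
  by (auto simp: cc_def divide_simps)

lemma space_mu: "space \<mu> = UNIV"
  using sets_eq_imp_space_eq[OF S] by simp

lemma open_sets: "open X \<Longrightarrow> X \<in> sets \<mu>"
  using S by simp

lemma Om_sets: "\<Omega> \<in> sets \<mu>" using open_sets Om(1) by simp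

lemma A_sets: "A s \<in> sets \<mu>" using open_sets A_open by simp

lemma pre_open: "0 < \<epsilon> \<Longrightarrow> \<epsilon> < 1 \<Longrightarrow> open {x\<in>\<Omega>. f (cc \<epsilon> *\<^sub>R x) < s}"
proof -
  assume e: "0 < \<epsilon>" "\<epsilon> < 1"
  have "{x\<in>\<Omega>. f (cc \<epsilon> *\<^sub>R x) < s} = \<Omega> \<inter> (\<lambda>x. cc \<epsilon> *\<^sub>R x) -` A s"
    using h_scale(1) cc[OF e] by (auto simp: A_def)
  moreover have "open ((\<lambda>x. cc \<epsilon> *\<^sub>R x) -` A s)"
    by (rule open_vimage[OF A_open]) (intro continuous_intros)
  ultimately show ?thesis using Om(1) by auto
qed

lemma D_sets: "0 < \<epsilon> \<Longrightarrow> \<epsilon> < 1 \<Longrightarrow> D \<epsilon> s \<in> sets \<mu>"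
proof -
  assume e: "0 < \<epsilon>" "\<epsilon> < 1"
  have "D \<epsilon> s = {x\<in>\<Omega>. f (cc \<epsilon> *\<^sub>R x) < s} - A s" by (auto simp: D_def A_def)
  then show ?thesis using open_sets[OF pre_open[OF e]] A_sets by simp
qed

lemma Om_compl: "measure \<mu> (UNIV - \<Omega>) = 0"
proof -
  interpret prob_space \<mu> by (rule P)
  have "emeasure \<mu> (space \<mu> - \<Omega>) = emeasure \<mu> (space \<mu>) - emeasure \<mu> \<Omega>"
    by (rule emeasure_compl[OF Om_sets]) (simp add: E)
  then have "emeasure \<mu> (UNIV - \<Omega>) = 0" using E emeasure_space_1 space_mu by simp
  then show ?thesis by (simp add: measure_def)
qed

lemma outer_bound:
  assumes e: "0 < \<epsilon>" "\<epsilon> < 1"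
  shows "enn2real (outer_measure_of \<mu> (eps_ext (A s) \<epsilon>)) - measure \<mu> (A s) \<le> measure \<mu> (D \<epsilon> s)"
proof -
  interpret prob_space \<mu> by (rule P)
  have Cs: "UNIV - \<Omega> \<in> sets \<mu>" using sets.compl_sets[OF Om_sets] space_mu by simp
  define B where "B = (UNIV - \<Omega>) \<union> A s \<union> D \<epsilon> s"
  have Bs: "B \<in> sets \<mu>" unfolding B_def using Om_sets A_sets D_sets[OF e] space_mu
    by (metis sets.Un sets.compl_sets)
  have sub: "eps_ext (A s) \<epsilon> \<subseteq> B"
  proof
    fix x assume x: "x \<in> eps_ext (A s) \<epsilon>"
    have "cc \<epsilon> *\<^sub>R x \<in> A s" using A_scale[OF e x] by (simp add: cc_def)
    then show "x \<in> B" by (cases "f x < s") (auto simp: B_def A_def D_def)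
  qed
  have "outer_measure_of \<mu> (eps_ext (A s) \<epsilon>) \<le> emeasure \<mu> B"
    unfolding outer_measure_of_def using Bs sub by (intro INF_lower) auto
  also have "\<dots> = ennreal (measure \<mu> B)" by (simp add: emeasure_eq_measure)
  finally have "enn2real (outer_measure_of \<mu> (eps_ext (A s) \<epsilon>)) \<le> measure \<mu> B"
    by (metis enn2real_ennreal enn2real_mono ennreal_less_top measure_nonneg)
  also have "measure \<mu> B \<le> measure \<mu> ((UNIV - \<Omega>) \<union> A s) + measure \<mu> (D \<epsilon> s)"
    unfolding B_def using Cs A_sets D_sets[OF e]
    by (intro measure_Un_le) auto
  also have "measure \<mu> ((UNIV - \<Omega>) \<union> A s) \<le> measure \<mu> (UNIV - \<Omega>) + measure \<mu> (A s)"
    using Cs A_sets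
    by (intro measure_Un_le) auto
  finally show ?thesis using Om_compl by simp
qed

lemma mu_star_bound:
  assumes e: "\<And>n. 0 < e n" "\<And>n. e n < 1" and el: "e \<longlonglongrightarrow> 0"
  shows "mu_star \<mu> (A s) \<le> liminf (\<lambda>n. ereal (measure \<mu> (D (e n) s) / e n))"
proof -
  define G where "G = (\<lambda>\<epsilon>. ereal ((enn2real (outer_measure_of \<mu> (eps_ext (A s) \<epsilon>)) - measure \<mu> (A s)) / \<epsilon>))"
  have fl: "filterlim e (at_right 0) sequentially"
    by (rule tendsto_imp_filterlim_at_right[OF el]) (use e in auto)
  have "mu_star \<mu> (A s) = Liminf (at_right 0) G" by (simp add: mu_star_def G_def)
  also have "\<dots> \<le> Liminf (filtermap e sequentially) G"
    using fl unfolding filterlim_def by (rule Liminf_filter_mono)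
  also have "\<dots> \<le> liminf (\<lambda>n. G (e n))" by (rule Liminf_filtermap_le)
  also have "\<dots> \<le> liminf (\<lambda>n. ereal (measure \<mu> (D (e n) s) / e n))"
  proof (intro Liminf_mono always_eventually allI)
    fix n
    show "G (e n) \<le> ereal (measure \<mu> (D (e n) s) / e n)"
      unfolding G_def using outer_bound[OF e(1)[of n] e(2)[of n], of s] e(1)[of n]
      by (simp add: divide_right_mono)
  qed
  finally show ?thesis .
qed

lemma Phi_bound:
  assumes e: "\<And>n. 0 < e n" and el: "e \<longlonglongrightarrow> 0"
  shows "limsup (\<lambda>n. ereal ((f x - f (cc (e n) *\<^sub>R x)) / e n)) \<le> Phi f x"
proof -
  define G where "G = (\<lambda>\<epsilon>. ereal ((f x - f (((1 - \<epsilon>) / (1 + \<epsilon>)) *\<^sub>R x)) / \<epsilon>))"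
  have fl: "filterlim e (at_right 0) sequentially"
    by (rule tendsto_imp_filterlim_at_right[OF el]) (use e in auto)
  have "limsup (\<lambda>n. ereal ((f x - f (cc (e n) *\<^sub>R x)) / e n)) = limsup (\<lambda>n. G (e n))"
    by (simp add: G_def cc_def)
  also have "\<dots> \<le> Limsup (filtermap e sequentially) G" by (rule Limsup_filtermap_ge)
  also have "\<dots> \<le> Limsup (at_right 0) G"
    using fl unfolding filterlim_def by (rule Limsup_filter_mono)
  also have "\<dots> = Phi f x" by (simp add: Phi_def G_def)
  finally show ?thesis .
qed

lemma f_conv:
  assumes x: "x \<in> \<Omega>" and el: "e \<longlonglongrightarrow> 0"
  shows "(\<lambda>n. f (cc (e n) *\<^sub>R x)) \<longlonglongrightarrow> f x"
proof -
  have "(\<lambda>n. cc (e n)) \<longlonglongrightarrow> (1 - 0) / (1 + 0)" unfolding cc_def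
    by (intro tendsto_intros el) auto
  then have "(\<lambda>n. cc (e n) *\<^sub>R x) \<longlonglongrightarrow> 1 *\<^sub>R x" by (intro tendsto_intros) simp
  moreover have "isCont f x" using fcont Om(1) x continuous_on_eq_continuous_at by blast
  ultimately show ?thesis using isCont_tendsto_compose by fastforce
qed

end



context setting begin

definition F where "F x = (if x \<in> \<Omega> then f x else 0)"

lemma F_borel: "F \<in> borel_measurable borel"
  unfolding F_def[abs_def]
  by (rule borel_measurable_continuous_on_if) (use Om(1) fcont in auto)

lemma F_mu[measurable]: "F \<in> borel_measurable \<mu>"
  using F_borel measurable_cong_sets[OF S refl] by blast

lemma Om_mu[measurable]: "\<Omega> \<in> sets \<mu>" by (rule Om_sets)

lemma pair_meas:
  assumes \<sigma>m[measurable]: "\<sigma> \<in> borel_measurable borel"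
  shows "(\<lambda>z. indicator {0<..} (fst z) * ennreal (fst z powr (p-1)) *
     indicator {z. snd z \<in> \<Omega> \<and> F (c *\<^sub>R snd z) < \<sigma> (fst z) \<and> \<sigma> (fst z) \<le> F (snd z)} z)
     \<in> borel_measurable (lborel \<Otimes>\<^sub>M \<mu>)"
proof -
  have [measurable]: "(\<lambda>x. F (c *\<^sub>R x)) \<in> borel_measurable \<mu>"
  proof -
    have "(\<lambda>x::'a. c *\<^sub>R x) \<in> borel_measurable borel"
      by measurable
    then have "(\<lambda>x. c *\<^sub>R x) \<in> measurable \<mu> borel" using measurable_cong_sets[OF S refl] by blast
    from measurable_compose[OF this F_borel] show ?thesis .
  qed
  have "{z \<in> space (lborel \<Otimes>\<^sub>M \<mu>). snd z \<in> \<Omega> \<and> F (c *\<^sub>R snd z) < \<sigma> (fst z) \<and> \<sigma> (fst z) \<le> F (snd z)} \<in> sets (lborel \<Otimes>\<^sub>M \<mu>)"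
    by measurable
  moreover have "space (lborel \<Otimes>\<^sub>M \<mu>) = UNIV" by (simp add: space_pair_measure space_mu)
  ultimately show ?thesis by measurable
qed

lemma D_ind:
  assumes e: "0 < \<epsilon>" "\<epsilon> < 1"
  shows "indicator (D \<epsilon> s) x = (indicator {z. snd z \<in> \<Omega> \<and> F (cc \<epsilon> *\<^sub>R snd z) < s \<and> s \<le> F (snd z)} (t, x) :: ennreal)"
  using h_scale(1)[OF _ cc[OF e, THEN conjunct1] cc[OF e, THEN conjunct2], of x]
  by (auto simp: D_def F_def indicator_def)

lemma chain:
  fixes \<sigma> :: "real \<Rightarrow> real" and e :: "nat \<Rightarrow> real" and R :: "nat \<Rightarrow> 'a \<Rightarrow> real"
    and T W :: "'a \<Rightarrow> ennreal"
  assumes \<sigma>m[measurable]: "\<sigma> \<in> borel_measurable borel"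
    and e: "\<And>n. 0 < e n" "\<And>n. e n < 1" "e \<longlonglongrightarrow> 0"
    and inner: "\<And>n x. x \<in> \<Omega> \<Longrightarrow> (\<integral>\<^sup>+t. indicator {0<..} t * ennreal (t powr (p-1)) *
         indicator {t. f (cc (e n) *\<^sub>R x) < \<sigma> t \<and> \<sigma> t \<le> f x} t \<partial>lborel) = ennreal (R n x)"
    and um[measurable]: "\<And>n. (\<lambda>x. indicator \<Omega> x * ennreal (R n x / e n)) \<in> borel_measurable \<mu>"
    and Wm[measurable]: "W \<in> borel_measurable \<mu>" and Wi: "(\<integral>\<^sup>+x. W x \<partial>\<mu>) < \<infinity>"
    and bound: "\<And>n x. x \<in> \<Omega> \<Longrightarrow> ennreal (R n x / e n) \<le> W x"
    and pt: "\<And>x. x \<in> \<Omega> \<Longrightarrow> limsup (\<lambda>n. ennreal (R n x / e n)) \<le> T x"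
  shows "(\<integral>\<^sup>+t. indicator {0<..} t * ennreal (t powr (p-1)) * e2ennreal (mu_star \<mu> (A (\<sigma> t))) \<partial>lborel)
      \<le> (\<integral>\<^sup>+x. indicator \<Omega> x * T x \<partial>\<mu>)"
proof -
  interpret prob_space \<mu> by (rule P)
  interpret pair_sigma_finite lborel \<mu> by unfold_locales
  define w where "w t = indicator {0<..} t * ennreal (t powr (p-1))" for t :: real
  define Sn where "Sn n = {z. snd z \<in> \<Omega> \<and> F (cc (e n) *\<^sub>R snd z) < \<sigma> (fst z) \<and> \<sigma> (fst z) \<le> F (snd z)}" for n
  define G where "G n t x = w t * indicator (D (e n) (\<sigma> t)) x * ennreal (1 / e n)" for n t x
  define Fn where "Fn n t = (\<integral>\<^sup>+x. G n t x \<partial>\<mu>)" for n t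
  define u where "u n x = indicator \<Omega> x * ennreal (R n x / e n)" for n x
  have Geq: "G n t x = w t * indicator (Sn n) (t, x) * ennreal (1 / e n)" for n t x
    unfolding G_def Sn_def using D_ind[OF e(1) e(2), of n "\<sigma> t" x t] by (simp add: indicator_def)
  have Gm: "case_prod (G n) \<in> borel_measurable (lborel \<Otimes>\<^sub>M \<mu>)" for n
  proof -
    have "(\<lambda>z. indicator {0<..} (fst z) * ennreal (fst z powr (p-1)) * indicator (Sn n) z) \<in> borel_measurable (lborel \<Otimes>\<^sub>M \<mu>)"
      unfolding Sn_def by (rule pair_meas[OF \<sigma>m])
    then have "(\<lambda>z. indicator {0<..} (fst z) * ennreal (fst z powr (p-1)) * indicator (Sn n) z * ennreal (1 / e n)) \<in> borel_measurable (lborel \<Otimes>\<^sub>M \<mu>)"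
      by measurable
    moreover have "case_prod (G n) = (\<lambda>z. indicator {0<..} (fst z) * ennreal (fst z powr (p-1)) * indicator (Sn n) z * ennreal (1 / e n))"
      by (auto simp: Geq w_def)
    ultimately show ?thesis by simp
  qed
  have Fnm: "Fn n \<in> borel_measurable lborel" for n
    unfolding Fn_def by (rule sigma_finite_measure.borel_measurable_nn_integral[OF prob_space_imp_sigma_finite[OF P] Gm[of n]])
  have Fn_eq: "Fn n t = w t * ennreal (measure \<mu> (D (e n) (\<sigma> t)) / e n)" for n t
  proof -
    have "Fn n t = (\<integral>\<^sup>+x. (w t * ennreal (1 / e n)) * indicator (D (e n) (\<sigma> t)) x \<partial>\<mu>)"
      unfolding Fn_def G_def by (simp add: mult_ac)
    also have "\<dots> = (w t * ennreal (1 / e n)) * emeasure \<mu> (D (e n) (\<sigma> t))"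
      by (rule nn_integral_cmult_indicator[OF D_sets[OF e(1) e(2)]])
    also have "\<dots> = w t * ennreal (measure \<mu> (D (e n) (\<sigma> t)) / e n)"
      using e(1)[of n] by (simp add: emeasure_eq_measure mult_ac ennreal_mult'' divide_inverse)
    finally show ?thesis .
  qed
  have lim_le: "w t * e2ennreal (mu_star \<mu> (A (\<sigma> t))) \<le> liminf (\<lambda>n. Fn n t)" for t
  proof (cases "t > 0")
    case False
    then show ?thesis by (simp add: w_def)
  next
    case True
    define k where "k = t powr (p-1)"
    have k: "0 \<le> k" by (simp add: k_def)
    have wk: "w t = ennreal k" using True by (simp add: w_def k_def)
    have "ereal k * mu_star \<mu> (A (\<sigma> t)) \<le> ereal k * liminf (\<lambda>n. ereal (measure \<mu> (D (e n) (\<sigma> t)) / e n))"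
      using mu_star_bound[OF e, of "\<sigma> t"] k by (intro ereal_mult_left_mono) auto
    also have "\<dots> = liminf (\<lambda>n. ereal k * ereal (measure \<mu> (D (e n) (\<sigma> t)) / e n))"
      by (rule Liminf_ereal_mult_left[symmetric]) (use k in auto)
    finally have "e2ennreal (ereal k * mu_star \<mu> (A (\<sigma> t))) \<le> e2ennreal (liminf (\<lambda>n. ereal (k * (measure \<mu> (D (e n) (\<sigma> t)) / e n))))"
      by (intro e2ennreal_mono) simp
    also have "\<dots> = liminf (\<lambda>n. ennreal (k * (measure \<mu> (D (e n) (\<sigma> t)) / e n)))"
      by (rule liminf_ennreal_e2[symmetric])
    also have "\<dots> = liminf (\<lambda>n. Fn n t)"
      unfolding Fn_eq wk by (intro arg_cong[where f=liminf] ext) (rule ennreal_mult'[OF k])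
    finally show ?thesis using k wk by (simp add: e2ennreal_mult_ereal)
  qed
  have int_eq: "(\<integral>\<^sup>+t. Fn n t \<partial>lborel) = (\<integral>\<^sup>+x. u n x \<partial>\<mu>)" for n
  proof -
    have "(\<integral>\<^sup>+t. Fn n t \<partial>lborel) = (\<integral>\<^sup>+x. (\<integral>\<^sup>+t. G n t x \<partial>lborel) \<partial>\<mu>)"
      unfolding Fn_def by (rule Fubini'[OF Gm, symmetric])
    also have "\<dots> = (\<integral>\<^sup>+x. u n x \<partial>\<mu>)"
    proof (rule nn_integral_cong)
      fix x
      show "(\<integral>\<^sup>+t. G n t x \<partial>lborel) = u n x"
      proof (cases "x \<in> \<Omega>")
        case False
        then show ?thesis by (simp add: G_def u_def D_def)
      next
        case True
        have "(\<integral>\<^sup>+t. G n t x \<partial>lborel) = (\<integral>\<^sup>+t. (indicator {0<..} t * ennreal (t powr (p-1)) *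
            indicator {t. f (cc (e n) *\<^sub>R x) < \<sigma> t \<and> \<sigma> t \<le> f x} t) * ennreal (1 / e n) \<partial>lborel)"
          using True by (intro nn_integral_cong) (simp add: G_def w_def D_def indicator_def)
        also have "\<dots> = (\<integral>\<^sup>+t. indicator {0<..} t * ennreal (t powr (p-1)) *
            indicator {t. f (cc (e n) *\<^sub>R x) < \<sigma> t \<and> \<sigma> t \<le> f x} t \<partial>lborel) * ennreal (1 / e n)"
          by (rule nn_integral_multc) measurable
        also have "\<dots> = ennreal (R n x) * ennreal (1 / e n)" using inner[OF True] by simp
        also have "\<dots> = u n x" using True e(1)[of n] by (simp add: u_def ennreal_mult'' divide_inverse)
        finally show ?thesis .
      qed
    qed
    finally show ?thesis .
  qed
  have "(\<integral>\<^sup>+t. indicator {0<..} t * ennreal (t powr (p-1)) * e2ennreal (mu_star \<mu> (A (\<sigma> t))) \<partial>lborel)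
      \<le> (\<integral>\<^sup>+t. liminf (\<lambda>n. Fn n t) \<partial>lborel)"
    by (intro nn_integral_mono) (use lim_le in \<open>simp add: w_def\<close>)
  also have "\<dots> \<le> liminf (\<lambda>n. \<integral>\<^sup>+t. Fn n t \<partial>lborel)"
    by (rule nn_integral_liminf[OF Fnm])
  also have "\<dots> = liminf (\<lambda>n. \<integral>\<^sup>+x. u n x \<partial>\<mu>)" by (simp add: int_eq)
  also have "\<dots> \<le> limsup (\<lambda>n. \<integral>\<^sup>+x. u n x \<partial>\<mu>)" by (rule Liminf_le_Limsup) simp
  also have "\<dots> \<le> (\<integral>\<^sup>+x. limsup (\<lambda>n. u n x) \<partial>\<mu>)"
  proof (rule nn_integral_limsup[OF _ Wm _ Wi])
    show "u i \<in> borel_measurable \<mu>" for i unfolding u_def by (rule um)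
    show "AE x in \<mu>. u i x \<le> W x" for i
      by (intro AE_I2) (use bound in \<open>auto simp: u_def indicator_def\<close>)
  qed
  also have "\<dots> \<le> (\<integral>\<^sup>+x. indicator \<Omega> x * T x \<partial>\<mu>)"
  proof (intro nn_integral_mono)
    fix x show "limsup (\<lambda>n. u n x) \<le> indicator \<Omega> x * T x"
      using pt[of x] by (cases "x \<in> \<Omega>") (simp_all add: u_def Limsup_const)
  qed
  finally show ?thesis .
qed

end



context setting begin

definition ee :: "real \<Rightarrow> nat \<Rightarrow> real" where "ee e0 n = e0 / (real n + 2)"

lemma ee:
  assumes "0 < e0" "e0 \<le> 1"
  shows "\<And>n. 0 < ee e0 n" "\<And>n. ee e0 n < 1" "\<And>n. ee e0 n < e0" "ee e0 \<longlonglongrightarrow> 0"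
proof -
  fix n
  show "0 < ee e0 n" using assms by (simp add: ee_def)
  show "ee e0 n < e0" using assms by (simp add: ee_def divide_simps)
  then show "ee e0 n < 1" using assms by simp
next
  have "(\<lambda>n. e0 / (real n + 2)) \<longlonglongrightarrow> 0"
  proof (rule tendsto_divide_0[OF tendsto_const])
    have "filterlim (\<lambda>n. 2 + real n) at_top sequentially"
      by (rule filterlim_tendsto_add_at_top[OF tendsto_const filterlim_real_sequentially])
    then show "filterlim (\<lambda>n. real n + 2) at_infinity sequentially"
      by (simp add: add.commute filterlim_at_top_imp_at_infinity)
  qed
  then show "ee e0 \<longlonglongrightarrow> 0" by (simp add: ee_def[abs_def])
qed

lemma QC_obtain:
  obtains g e0 where "g \<in> borel_measurable borel" "\<And>x. 0 \<le> g x" "integrable \<mu> g" "0 < e0" "e0 \<le> 1"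
    "\<And>x \<epsilon>. x \<in> \<Omega> \<Longrightarrow> 0 < \<epsilon> \<Longrightarrow> \<epsilon> < e0 \<Longrightarrow> (h x - h (cc \<epsilon> *\<^sub>R x)) / \<epsilon> \<le> g x"
proof -
  from qc obtain g e0 where g: "g \<in> borel_measurable borel" "\<forall>x. 0 \<le> g x" "integrable \<mu> g" "0 < e0" "e0 \<le> 1"
    "\<forall>x\<in>\<Omega>. \<forall>\<epsilon>\<in>{0<..<e0}. (f x powr p - f (((1 - \<epsilon>) / (1 + \<epsilon>)) *\<^sub>R x) powr p) / \<epsilon> \<le> g x"
    unfolding QC_def by blast
  show thesis
  proof (rule that[of g e0])
    fix x \<epsilon> assume "x \<in> \<Omega>" "0 < \<epsilon>" "\<epsilon> < e0"
    then show "(h x - h (cc \<epsilon> *\<^sub>R x)) / \<epsilon> \<le> g x" using g(6) by (auto simp: h_def cc_def)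
  qed (use g in auto)
qed

lemma W_fin:
  assumes "integrable \<mu> g" "\<And>x. 0 \<le> g x" "0 < k"
  shows "(\<integral>\<^sup>+x. ennreal (g x / k) \<partial>\<mu>) < \<infinity>"
proof -
  have "(\<integral>\<^sup>+x. ennreal (g x / k) \<partial>\<mu>) = ennreal (integral\<^sup>L \<mu> (\<lambda>x. g x / k))"
    using assms by (intro nn_integral_eq_integral) auto
  then show ?thesis by simp
qed

lemma g_mu: "g \<in> borel_measurable borel \<Longrightarrow> g \<in> borel_measurable \<mu>"
  using measurable_cong_sets[OF S refl] by blast

lemma part1:
  "(\<integral>\<^sup>+ t. indicator {0<..} t * ennreal (t powr (p - 1)) *
               e2ennreal (mu_star \<mu> {x\<in>\<Omega>. f x < t}) \<partial>lborel)
         \<le> (\<integral>\<^sup>+ x. indicator \<Omega> x * ennreal (f x powr (p - 1)) * e2ennreal (Phi f x) \<partial>\<mu>)"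
proof -
  obtain g e0 where g: "g \<in> borel_measurable borel" "\<And>x. 0 \<le> g x" "integrable \<mu> g" and e0: "0 < e0" "e0 \<le> 1"
    and gb: "\<And>x \<epsilon>. x \<in> \<Omega> \<Longrightarrow> 0 < \<epsilon> \<Longrightarrow> \<epsilon> < e0 \<Longrightarrow> (h x - h (cc \<epsilon> *\<^sub>R x)) / \<epsilon> \<le> g x"
    using QC_obtain by blast
  define e where "e = ee e0"
  note e = ee[OF e0, folded e_def]
  define R where "R n x = (f x powr p - f (cc (e n) *\<^sub>R x) powr p) / p" for n x
  define T where "T x = ennreal (f x powr (p - 1)) * e2ennreal (Phi f x)" for x
  define W where "W x = ennreal (g x / p)" for x
  have ccn: "0 \<le> cc (e n)" "cc (e n) \<le> 1" for n using cc[OF e(1) e(2)] by auto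
  have "(\<integral>\<^sup>+t. indicator {0<..} t * ennreal (t powr (p-1)) * e2ennreal (mu_star \<mu> (A ((\<lambda>t. t) t))) \<partial>lborel)
      \<le> (\<integral>\<^sup>+x. indicator \<Omega> x * T x \<partial>\<mu>)"
  proof (rule chain[where R = R and W = W])
    show "(\<lambda>t. t) \<in> borel_measurable borel" by simp
    show "\<And>n. 0 < e n" "\<And>n. e n < 1" "e \<longlonglongrightarrow> 0" using e by auto
  next
    fix n x assume x: "x \<in> \<Omega>"
    have U0: "0 \<le> f (cc (e n) *\<^sub>R x)" using nn h_scale(1)[OF x ccn] by auto
    have UV: "f (cc (e n) *\<^sub>R x) \<le> f x" using f_scale[OF x ccn] .
    show "(\<integral>\<^sup>+t. indicator {0<..} t * ennreal (t powr (p-1)) *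
         indicator {t. f (cc (e n) *\<^sub>R x) < t \<and> t \<le> f x} t \<partial>lborel) = ennreal (R n x)"
      unfolding R_def by (rule inner_integral[OF p U0 UV]) auto
  next
    fix n
    have "(\<lambda>x. indicator \<Omega> x * ennreal (R n x / e n)) =
      (\<lambda>x. indicator \<Omega> x * ennreal (((F x powr p - F (cc (e n) *\<^sub>R x) powr p) / p) / e n))"
      using h_scale(1)[OF _ ccn] by (auto simp: R_def F_def indicator_def fun_eq_iff)
    moreover have "(\<lambda>x. F (cc (e n) *\<^sub>R x)) \<in> borel_measurable \<mu>"
    proof -
      have "(\<lambda>x::'a. cc (e n) *\<^sub>R x) \<in> borel_measurable borel" by measurable
      then have "(\<lambda>x. cc (e n) *\<^sub>R x) \<in> measurable \<mu> borel" using measurable_cong_sets[OF S refl] by blast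
      from measurable_compose[OF this F_borel] show ?thesis .
    qed
    ultimately show "(\<lambda>x. indicator \<Omega> x * ennreal (R n x / e n)) \<in> borel_measurable \<mu>"
      by simp
  next
    show "W \<in> borel_measurable \<mu>" unfolding W_def[abs_def] using g_mu[OF g(1)] by measurable
    show "(\<integral>\<^sup>+x. W x \<partial>\<mu>) < \<infinity>" unfolding W_def by (rule W_fin[OF g(3) g(2) p])
  next
    fix n x assume x: "x \<in> \<Omega>"
    have "R n x / e n = ((h x - h (cc (e n) *\<^sub>R x)) / e n) / p"
      by (simp add: R_def h_def divide_simps)
    also have "\<dots> \<le> g x / p" using gb[OF x e(1) e(3)] p by (intro divide_right_mono) auto
    finally show "ennreal (R n x / e n) \<le> W x" unfolding W_def by (rule ennreal_leI)
  next
    fix x assume x: "x \<in> \<Omega>"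
    show "limsup (\<lambda>n. ennreal (R n x / e n)) \<le> T x"
    proof (cases "f x = 0")
      case True
      have "f (cc (e n) *\<^sub>R x) = 0" for n
        using f_scale[OF x ccn, of n] nn h_scale(1)[OF x ccn, of n] True by force
      then have "R n x = 0" for n using True p by (simp add: R_def)
      then show ?thesis by (simp add: Limsup_const)
    next
      case False
      then have a: "f x > 0" using nn x by force
      have "limsup (\<lambda>n. ennreal ((f x powr p - f (cc (e n) *\<^sub>R x) powr p) / (p * e n)))
          \<le> ennreal (f x powr (p - 1)) * e2ennreal (Phi f x)"
        by (rule ptwise[OF _ a f_conv[OF x e(4)] f_scale[OF x ccn] e(1) Phi_bound[OF e(1) e(4)]]) (use p in auto)
      moreover have "R n x / e n = (f x powr p - f (cc (e n) *\<^sub>R x) powr p) / (p * e n)" for n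
        by (simp add: R_def)
      ultimately show ?thesis by (simp add: T_def)
    qed
  qed
  moreover have "A ((\<lambda>t. t) t) = {x\<in>\<Omega>. f x < t}" for t by (simp add: A_def)
  ultimately show ?thesis by (simp add: T_def mult.assoc)
qed

end



lemma one_over_powr: fixes b p :: real shows "0 < b \<Longrightarrow> (1 / b) powr p = b powr (- p)"
  by (simp add: powr_divide powr_minus_divide)

context setting begin

lemma part2:
  assumes pos: "\<forall>x\<in>\<Omega>. 0 < f x"
  shows "(\<integral>\<^sup>+ t. indicator {0<..} t * ennreal (t powr (p - 1)) *
               e2ennreal (mu_star \<mu> {x\<in>\<Omega>. 1 / f x > t}) \<partial>lborel)
         \<le> (\<integral>\<^sup>+ x. indicator \<Omega> x * ennreal (f x powr (- p - 1)) * e2ennreal (Phi f x) \<partial>\<mu>)"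
proof -
  obtain g e0 where g: "g \<in> borel_measurable borel" "\<And>x. 0 \<le> g x" "integrable \<mu> g" and e0: "0 < e0" "e0 \<le> 1"
    and gb: "\<And>x \<epsilon>. x \<in> \<Omega> \<Longrightarrow> 0 < \<epsilon> \<Longrightarrow> \<epsilon> < e0 \<Longrightarrow> (h x - h (cc \<epsilon> *\<^sub>R x)) / \<epsilon> \<le> g x"
    using QC_obtain by blast
  define e where "e = ee e0"
  note e = ee[OF e0, folded e_def]
  define R where "R n x = (f (cc (e n) *\<^sub>R x) powr (- p) - f x powr (- p)) / p" for n x
  define T where "T x = ennreal (f x powr (- p - 1)) * e2ennreal (Phi f x)" for x
  define m where "m = h 0"
  have "f 0 > 0" using pos zero by auto
  then have m: "m > 0" by (simp add: m_def h_def)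
  have hm: "x \<in> \<Omega> \<Longrightarrow> m \<le> h x" for x using h_scale(2)[of x 0] by (simp add: m_def)
  define W where "W x = ennreal (g x / (p * m * m))" for x
  have ccn: "0 \<le> cc (e n)" "cc (e n) \<le> 1" for n using cc[OF e(1) e(2)] by auto
  have "(\<integral>\<^sup>+t. indicator {0<..} t * ennreal (t powr (p-1)) * e2ennreal (mu_star \<mu> (A ((\<lambda>t. 1 / t) t))) \<partial>lborel)
      \<le> (\<integral>\<^sup>+x. indicator \<Omega> x * T x \<partial>\<mu>)"
  proof (rule chain[where R = R and W = W])
    have "(\<lambda>t::real. 1 / id t) \<in> borel_measurable borel" by (intro borel_measurable_divide) auto
    then show "(\<lambda>t::real. 1 / t) \<in> borel_measurable borel" by (simp add: id_def)
    show "\<And>n. 0 < e n" "\<And>n. e n < 1" "e \<longlonglongrightarrow> 0" using e by auto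
  next
    fix n x assume x: "x \<in> \<Omega>"
    have b0: "0 < f (cc (e n) *\<^sub>R x)" using pos h_scale(1)[OF x ccn] by auto
    have a0: "0 < f x" using pos x by auto
    have UV: "f (cc (e n) *\<^sub>R x) \<le> f x" using f_scale[OF x ccn] .
    have U0: "0 \<le> 1 / f x" using a0 by simp
    have UV': "1 / f x \<le> 1 / f (cc (e n) *\<^sub>R x)" using UV b0 by (simp add: divide_simps)
    have "(\<integral>\<^sup>+t. indicator {0<..} t * ennreal (t powr (p-1)) *
         indicator {t. f (cc (e n) *\<^sub>R x) < 1 / t \<and> 1 / t \<le> f x} t \<partial>lborel) =
         ennreal (((1 / f (cc (e n) *\<^sub>R x)) powr p - (1 / f x) powr p) / p)"
    proof (rule inner_integral[OF p U0 UV'])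
      fix t :: real assume t: "0 < t" "1 / f x < t" "t < 1 / f (cc (e n) *\<^sub>R x)"
      then show "t \<in> {t. f (cc (e n) *\<^sub>R x) < 1 / t \<and> 1 / t \<le> f x}"
        using a0 b0 by (auto simp: field_simps)
    next
      fix t :: real assume t: "0 < t" "t \<in> {t. f (cc (e n) *\<^sub>R x) < 1 / t \<and> 1 / t \<le> f x}"
      then show "1 / f x \<le> t \<and> t \<le> 1 / f (cc (e n) *\<^sub>R x)"
        using a0 b0 by (auto simp: field_simps)
    qed
    also have "\<dots> = ennreal (R n x)" using a0 b0 by (simp add: R_def one_over_powr)
    finally show "(\<integral>\<^sup>+t. indicator {0<..} t * ennreal (t powr (p-1)) *
         indicator {t. f (cc (e n) *\<^sub>R x) < 1 / t \<and> 1 / t \<le> f x} t \<partial>lborel) = ennreal (R n x)" .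
  next
    fix n
    have "(\<lambda>x. indicator \<Omega> x * ennreal (R n x / e n)) =
      (\<lambda>x. indicator \<Omega> x * ennreal (((F (cc (e n) *\<^sub>R x) powr (- p) - F x powr (- p)) / p) / e n))"
      using h_scale(1)[OF _ ccn] by (auto simp: R_def F_def indicator_def fun_eq_iff)
    moreover have "(\<lambda>x. F (cc (e n) *\<^sub>R x)) \<in> borel_measurable \<mu>"
    proof -
      have "(\<lambda>x::'a. cc (e n) *\<^sub>R x) \<in> borel_measurable borel" by measurable
      then have "(\<lambda>x. cc (e n) *\<^sub>R x) \<in> measurable \<mu> borel" using measurable_cong_sets[OF S refl] by blast
      from measurable_compose[OF this F_borel] show ?thesis .
    qed
    ultimately show "(\<lambda>x. indicator \<Omega> x * ennreal (R n x / e n)) \<in> borel_measurable \<mu>"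
      by simp
  next
    show "W \<in> borel_measurable \<mu>" unfolding W_def[abs_def] using g_mu[OF g(1)] by measurable
    show "(\<integral>\<^sup>+x. W x \<partial>\<mu>) < \<infinity>" unfolding W_def by (rule W_fin[OF g(3) g(2)]) (use p m in simp)
  next
    fix n x assume x: "x \<in> \<Omega>"
    define cx where "cx = cc (e n) *\<^sub>R x"
    have cxO: "cx \<in> \<Omega>" using h_scale(1)[OF x ccn] by (simp add: cx_def)
    have ha: "m \<le> h x" and hb: "m \<le> h cx" using hm x cxO by auto
    have hle: "h cx \<le> h x" using h_scale(2)[OF x ccn] by (simp add: cx_def)
    define \<Delta> where "\<Delta> = (h x - h cx) / e n"
    have \<Delta>: "0 \<le> \<Delta>" "\<Delta> \<le> g x" using gb[OF x e(1) e(3)] hle e(1)[of n] by (auto simp: \<Delta>_def cx_def)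
    have hx: "f x powr (-p) = 1 / h x" and hcx: "f cx powr (-p) = 1 / h cx"
      by (simp_all add: h_def powr_minus_divide)
    have "R n x / e n = (1 / h cx - 1 / h x) / p / e n"
      by (simp add: R_def hx hcx flip: cx_def)
    also have "\<dots> = \<Delta> / (p * (h x * h cx))"
      using m ha hb e(1)[of n] p by (simp add: \<Delta>_def field_simps)
    also have "\<dots> \<le> \<Delta> / (p * (m * m))"
      using m ha hb p \<Delta>(1) by (intro divide_left_mono mult_left_mono mult_mono mult_pos_pos) auto
    also have "\<dots> \<le> g x / (p * m * m)" using \<Delta>(2) m p by (simp add: divide_right_mono mult.assoc)
    finally show "ennreal (R n x / e n) \<le> W x" unfolding W_def by (rule ennreal_leI)
  next
    fix x assume x: "x \<in> \<Omega>"
    have a: "f x > 0" using pos x by auto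
    have "limsup (\<lambda>n. ennreal ((f x powr (-p) - f (cc (e n) *\<^sub>R x) powr (-p)) / ((-p) * e n)))
        \<le> ennreal (f x powr (-p - 1)) * e2ennreal (Phi f x)"
      by (rule ptwise[OF _ a f_conv[OF x e(4)] f_scale[OF x ccn] e(1) Phi_bound[OF e(1) e(4)]]) (use p in auto)
    moreover have "R n x / e n = (f x powr (-p) - f (cc (e n) *\<^sub>R x) powr (-p)) / ((-p) * e n)" for n
      by (simp add: R_def divide_simps)
    ultimately show "limsup (\<lambda>n. ennreal (R n x / e n)) \<le> T x" by (simp add: T_def)
  qed
  moreover have "(\<integral>\<^sup>+t. indicator {0<..} t * ennreal (t powr (p-1)) * e2ennreal (mu_star \<mu> (A ((\<lambda>t. 1 / t) t))) \<partial>lborel)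
     = (\<integral>\<^sup>+ t. indicator {0<..} t * ennreal (t powr (p - 1)) *
               e2ennreal (mu_star \<mu> {x\<in>\<Omega>. 1 / f x > t}) \<partial>lborel)"
  proof (rule nn_integral_cong)
    fix t :: real
    show "indicator {0<..} t * ennreal (t powr (p-1)) * e2ennreal (mu_star \<mu> (A ((\<lambda>t. 1 / t) t))) =
      indicator {0<..} t * ennreal (t powr (p - 1)) * e2ennreal (mu_star \<mu> {x\<in>\<Omega>. 1 / f x > t})"
    proof (cases "t > 0")
      case True
      have "A (1 / t) = {x\<in>\<Omega>. 1 / f x > t}"
        using True pos by (auto simp: A_def field_simps)
      then show ?thesis by simp
    qed simp
  qed
  ultimately show ?thesis by (simp add: T_def mult.assoc)
qed

end


theorem propositionp:
  fixes \<mu> :: "'a::euclidean_space measure" and \<Omega> :: "'a set" and p :: real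
  assumes "sym_convex_domain \<Omega>"
    and "prob_space \<mu>" and "sets \<mu> = sets borel" and "emeasure \<mu> \<Omega> = 1"
    and "p > 0"
  shows "(\<forall>f :: 'a \<Rightarrow> real. (\<forall>x\<in>\<Omega>. 0 \<le> f x) \<and> QC \<Omega> \<mu> (\<lambda>x. f x powr p) \<longrightarrow>
           (\<integral>\<^sup>+ t. indicator {0<..} t * ennreal (t powr (p - 1)) *
               e2ennreal (mu_star \<mu> {x\<in>\<Omega>. f x < t}) \<partial>lborel)
         \<le> (\<integral>\<^sup>+ x. indicator \<Omega> x * ennreal (f x powr (p - 1)) * e2ennreal (Phi f x) \<partial>\<mu>)) \<and>
         (\<forall>f :: 'a \<Rightarrow> real. (\<forall>x\<in>\<Omega>. 0 < f x) \<and> QC \<Omega> \<mu> (\<lambda>x. f x powr p) \<longrightarrow>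
           (\<integral>\<^sup>+ t. indicator {0<..} t * ennreal (t powr (p - 1)) *
               e2ennreal (mu_star \<mu> {x\<in>\<Omega>. 1 / f x > t}) \<partial>lborel)
         \<le> (\<integral>\<^sup>+ x. indicator \<Omega> x * ennreal (f x powr (- p - 1)) * e2ennreal (Phi f x) \<partial>\<mu>))"
proof (intro conjI allI impI)
  fix f :: "'a \<Rightarrow> real"
  assume a: "(\<forall>x\<in>\<Omega>. 0 \<le> f x) \<and> QC \<Omega> \<mu> (\<lambda>x. f x powr p)"
  have "setting \<Omega> \<mu> p f" unfolding setting_def using assms a by blast
  then interpret setting \<Omega> \<mu> p f .
  show "(\<integral>\<^sup>+ t. indicator {0<..} t * ennreal (t powr (p - 1)) *
               e2ennreal (mu_star \<mu> {x\<in>\<Omega>. f x < t}) \<partial>lborel)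
         \<le> (\<integral>\<^sup>+ x. indicator \<Omega> x * ennreal (f x powr (p - 1)) * e2ennreal (Phi f x) \<partial>\<mu>)"
    by (rule part1)
next
  fix f :: "'a \<Rightarrow> real"
  assume a: "(\<forall>x\<in>\<Omega>. 0 < f x) \<and> QC \<Omega> \<mu> (\<lambda>x. f x powr p)"
  have "setting \<Omega> \<mu> p f" unfolding setting_def using assms a by (blast intro: less_imp_le)
  then interpret setting \<Omega> \<mu> p f .
  show "(\<integral>\<^sup>+ t. indicator {0<..} t * ennreal (t powr (p - 1)) *
               e2ennreal (mu_star \<mu> {x\<in>\<Omega>. 1 / f x > t}) \<partial>lborel)
         \<le> (\<integral>\<^sup>+ x. indicator \<Omega> x * ennreal (f x powr (- p - 1)) * e2ennreal (Phi f x) \<partial>\<mu>)"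
    using a by (intro part2) blast
qed

end
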